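(* Let $D\subset\mathbb N^n$ be a finite set not contained in any coordinate hyperplane of $\mathbb R^n$, $p$ a prime, and $I\subset\{1,\dots,n\}$ with $\#I=k$. Then $\delta_p(D)\le\delta_p(D_I)+n-k$.
   Context: $D_I=\{\mathbf d\in D:d_j=0\text{ for }j\notin I\}$, regarded as a subset of $\mathbb N^I$. For a finite $D'\subset\mathbb N^{n'}$: if $D'$ is contained in a coordinate hyperplane, $\delta_p(D')=\infty$; otherwise $\delta_p(D')=\frac1{p-1}\min_{r\ge1}\frac{s_{D',p}(r)}r$, where $s_{D',p}(r)$ is the minimum of $\sum_{\mathbf d}s_p(u_{\mathbf d})$ over $U=(u_{\mathbf d})\in\{0,\dots,p^r-1\}^{D'}$ with $\sum u_{\mathbf d}\mathbf d\equiv0\pmod{p^r-1}$ and all coordinates of $\sum u_{\mathbf d}\mathbf d$ positive, and $s_p$ is the base-$p$ digit sum (the minimum over $r$ exists). *)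

theory Defs
  imports Complex_Main "HOL-Library.Extended_Real" "HOL-Computational_Algebra.Primes"
begin

function digit_sum :: "nat \<Rightarrow> nat \<Rightarrow> nat" where
  "digit_sum p m = (if p \<le> 1 \<or> m = 0 then 0 else m mod p + digit_sum p (m div p))"
  by auto
termination
  by (relation "measure (\<lambda>(p, m). m)") auto

text \<open>Vectors in N^J (J a finite index set) are functions nat => nat vanishing outside J.
  D' is contained in a coordinate hyperplane of R^J iff some coordinate j in J vanishes on all of D'.\<close>
definition in_coord_hyperplane :: "nat set \<Rightarrow> (nat \<Rightarrow> nat) set \<Rightarrow> bool" where
  "in_coord_hyperplane J D' \<longleftrightarrow> (\<exists>j\<in>J. \<forall>d\<in>D'. d j = 0)"

definition s_Dp :: "nat \<Rightarrow> nat set \<Rightarrow> (nat \<Rightarrow> nat) set \<Rightarrow> nat \<Rightarrow> nat" where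
  "s_Dp p J D' r = Min {(\<Sum>d\<in>D'. digit_sum p (u d)) | u.
      (\<forall>d\<in>D'. u d < p ^ r) \<and>
      (\<forall>j\<in>J. (\<Sum>d\<in>D'. u d * d j) mod (p ^ r - 1) = 0) \<and>
      (\<forall>j\<in>J. (\<Sum>d\<in>D'. u d * d j) > 0)}"

definition delta_p :: "nat \<Rightarrow> nat set \<Rightarrow> (nat \<Rightarrow> nat) set \<Rightarrow> ereal" where
  "delta_p p J D' = (if in_coord_hyperplane J D' then \<infinity>
     else ereal ((1 / (real p - 1)) * (INF r\<in>{1::nat..}. real (s_Dp p J D' r) / real r)))"

definition restrict_D :: "(nat \<Rightarrow> nat) set \<Rightarrow> nat set \<Rightarrow> (nat \<Rightarrow> nat) set" where
  "restrict_D D I = {d \<in> D. \<forall>j. j \<notin> I \<longrightarrow> d j = 0}"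

end

theory Submission
  imports Defs
begin

declare digit_sum.simps[simp del]

lemma digit_sum_le: "digit_sum p m \<le> m"
proof (induction p m rule: digit_sum.induct)
  case (1 p m)
  show ?case
  proof (cases "p \<le> 1 \<or> m = 0")
    case True then show ?thesis by (subst digit_sum.simps) simp
  next
    case False
    then have "digit_sum p m = m mod p + digit_sum p (m div p)" by (subst digit_sum.simps) simp
    also have "\<dots> \<le> m mod p + m div p" using 1 False by simp
    also have "\<dots> \<le> m" proof -
      have "m div p * 1 \<le> m div p * p" using False by (intro mult_le_mono2) auto
      then show ?thesis using div_mult_mod_eq[of m p] by linarith
    qed
    finally show ?thesis .
  qed
qed

lemma ds_pow: assumes "p \<ge> 2" shows "digit_sum p (p^r - 1) = r*(p-1)"
proof (induction r)
  case 0 then show ?case by (subst digit_sum.simps) simp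
next
  case (Suc r)
  have pr: "p^r \<ge> 1" using assms by simp
  have eq: "p^Suc r - 1 = (p-1) + p*(p^r-1)" using pr assms
    by (simp add: algebra_simps diff_mult_distrib2)
  have m0: "((p-1) + p*(p^r-1)) mod p = (p-1) mod p" by (rule mod_mult_self2)
  have m: "(p^Suc r - 1) mod p = p - 1" unfolding eq m0 using assms by simp
  have d0: "((p-1) + p*(p^r-1)) div p = (p^r-1) + (p-1) div p" using assms
    by (intro div_mult_self2) simp
  have d: "(p^Suc r - 1) div p = p^r - 1" unfolding eq d0 using assms by simp
  have nz: "p^Suc r - 1 \<noteq> 0" proof -
    have "1 < p^Suc r" using assms by (intro one_less_power) auto
    then show ?thesis by simp
  qed
  have "digit_sum p (p^Suc r - 1) = (p^Suc r - 1) mod p + digit_sum p ((p^Suc r - 1) div p)"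
    using assms nz by (subst digit_sum.simps) simp
  then show ?case using m d Suc by simp
qed

lemma S_finite:
  assumes "finite D'"
  shows "finite {(\<Sum>d\<in>D'. digit_sum p (u d)) | u.
      (\<forall>d\<in>D'. u d < p ^ r) \<and>
      (\<forall>j\<in>J. (\<Sum>d\<in>D'. u d * d j) mod (p ^ r - 1) = 0) \<and>
      (\<forall>j\<in>J. (\<Sum>d\<in>D'. u d * d j) > 0)}" (is "finite ?S")
proof (rule finite_subset)
  show "?S \<subseteq> {..(\<Sum>d\<in>D'. p^r)}"
  proof
    fix x assume "x \<in> ?S"
    then obtain u where x: "x = (\<Sum>d\<in>D'. digit_sum p (u d))" and u: "\<forall>d\<in>D'. u d < p ^ r"
      by blast
    have "x \<le> (\<Sum>d\<in>D'. u d)" unfolding x by (rule sum_mono) (rule digit_sum_le)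
    also have "\<dots> \<le> (\<Sum>d\<in>D'. p^r)" by (rule sum_mono) (use u in force)
    finally show "x \<in> {..(\<Sum>d\<in>D'. p^r)}" by simp
  qed
qed simp

lemma S_nonempty:
  assumes "finite D'" "\<not> in_coord_hyperplane J D'" "p \<ge> 2" "r \<ge> 1"
  shows "(\<Sum>d\<in>D'. digit_sum p (p^r - 1)) \<in> {(\<Sum>d\<in>D'. digit_sum p (u d)) | u.
      (\<forall>d\<in>D'. u d < p ^ r) \<and>
      (\<forall>j\<in>J. (\<Sum>d\<in>D'. u d * d j) mod (p ^ r - 1) = 0) \<and>
      (\<forall>j\<in>J. (\<Sum>d\<in>D'. u d * d j) > 0)}"
proof -
  have pr: "p^r > 1" using assms by (intro one_less_power) auto
  define u :: "(nat \<Rightarrow> nat) \<Rightarrow> nat" where "u = (\<lambda>_. p^r - 1)"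
  have "\<forall>d\<in>D'. u d < p ^ r" using pr unfolding u_def by auto
  moreover have "\<forall>j\<in>J. (\<Sum>d\<in>D'. u d * d j) mod (p ^ r - 1) = 0"
    unfolding u_def by (simp add: sum_distrib_left[symmetric])
  moreover have "\<forall>j\<in>J. (\<Sum>d\<in>D'. u d * d j) > 0"
  proof
    fix j assume "j \<in> J"
    then obtain d0 where d0: "d0 \<in> D'" "d0 j \<noteq> 0" using assms(2) unfolding in_coord_hyperplane_def by blast
    have "0 < d0 j" using d0 by simp
    also have "\<dots> \<le> (\<Sum>d\<in>D'. d j)" by (rule member_le_sum) (use d0 assms(1) in auto)
    finally show "(\<Sum>d\<in>D'. u d * d j) > 0" unfolding u_def using pr
      by (simp add: sum_distrib_left[symmetric])
  qed
  moreover have "(\<Sum>d\<in>D'. digit_sum p (p^r - 1)) = (\<Sum>d\<in>D'. digit_sum p (u d))"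
    unfolding u_def by simp
  ultimately show ?thesis by blast
qed


lemma s_bound:
  fixes n k p r :: nat and D :: "(nat \<Rightarrow> nat) set" and I :: "nat set"
  assumes fD: "finite D"
    and supp: "\<forall>d\<in>D. \<forall>j. j \<notin> {1..n} \<longrightarrow> d j = 0"
    and nh: "\<not> in_coord_hyperplane {1..n} D"
    and p2: "p \<ge> 2"
    and IS: "I \<subseteq> {1..n}" and cI: "card I = k"
    and nhI: "\<not> in_coord_hyperplane I (restrict_D D I)"
    and r1: "r \<ge> 1"
  shows "s_Dp p {1..n} D r \<le> s_Dp p I (restrict_D D I) r + (n-k)*(r*(p-1))"
proof -
  define DI where "DI = restrict_D D I"
  have DID: "DI \<subseteq> D" unfolding DI_def restrict_D_def by auto
  have fDI: "finite DI" using DID fD finite_subset by blast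
  have pr: "p^r > 1" using p2 r1 by (intro one_less_power) auto
  let ?SI = "{(\<Sum>d\<in>DI. digit_sum p (u d)) | u.
      (\<forall>d\<in>DI. u d < p ^ r) \<and>
      (\<forall>j\<in>I. (\<Sum>d\<in>DI. u d * d j) mod (p ^ r - 1) = 0) \<and>
      (\<forall>j\<in>I. (\<Sum>d\<in>DI. u d * d j) > 0)}"
  have "finite ?SI" by (rule S_finite[OF fDI])
  moreover have "?SI \<noteq> {}" using S_nonempty[OF fDI nhI[folded DI_def] p2 r1] by blast
  ultimately have "Min ?SI \<in> ?SI" by (rule Min_in)
  then obtain u where u1: "\<forall>d\<in>DI. u d < p ^ r"
     and u2: "\<forall>j\<in>I. (\<Sum>d\<in>DI. u d * d j) mod (p ^ r - 1) = 0"
     and u3: "\<forall>j\<in>I. (\<Sum>d\<in>DI. u d * d j) > 0"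
     and u4: "(\<Sum>d\<in>DI. digit_sum p (u d)) = s_Dp p I DI r"
    unfolding s_Dp_def by auto
  have "\<forall>j\<in>{1..n} - I. \<exists>d\<in>D. d j > 0" using nh unfolding in_coord_hyperplane_def by auto
  then obtain e where e: "\<And>j. j \<in> {1..n} - I \<Longrightarrow> e j \<in> D \<and> e j j > 0" by metis
  define E where "E = e ` ({1..n} - I)"
  have ED: "E \<subseteq> D" unfolding E_def using e by auto
  have fE: "finite E" unfolding E_def by simp
  have cE: "card E \<le> n - k"
  proof -
    have "card E \<le> card ({1..n} - I)" unfolding E_def by (rule card_image_le) simp
    also have "\<dots> = n - k" using IS cI by (simp add: card_Diff_subset finite_subset)
    finally show ?thesis .
  qed
  have disj: "E \<inter> DI = {}"
  proof (rule ccontr)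
    assume "E \<inter> DI \<noteq> {}"
    then obtain j where j: "j \<in> {1..n} - I" "e j \<in> DI" unfolding E_def by blast
    then have "e j j = 0" unfolding DI_def restrict_D_def by auto
    with e[OF j(1)] show False by simp
  qed
  define u' where "u' = (\<lambda>d. if d \<in> E then p^r - 1 else if d \<in> DI then u d else 0)"
  have c1: "\<forall>d\<in>D. u' d < p ^ r" using u1 pr p2 unfolding u'_def by auto
  have sumj: "(\<Sum>d\<in>D. u' d * d j) = (p^r - 1) * (\<Sum>d\<in>E. d j) + (\<Sum>d\<in>DI. u d * d j)" for j
  proof -
    have "(\<Sum>d\<in>D. u' d * d j) = (\<Sum>d\<in>D. (if d \<in> E then (p^r-1) * d j else 0) + (if d \<in> DI then u d * d j else 0))"
      by (rule sum.cong) (use disj in \<open>auto simp: u'_def\<close>)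
    also have "\<dots> = (\<Sum>d\<in>D \<inter> E. (p^r-1) * d j) + (\<Sum>d\<in>D \<inter> DI. u d * d j)"
      by (simp only: sum.distrib sum.inter_restrict[OF fD])
    also have "D \<inter> E = E" using ED by auto
    also have "D \<inter> DI = DI" using DID by auto
    finally show ?thesis by (simp add: sum_distrib_left)
  qed
  have c2: "\<forall>j\<in>{1..n}. (\<Sum>d\<in>D. u' d * d j) mod (p ^ r - 1) = 0"
  proof
    fix j assume j: "j \<in> {1..n}"
    have "(\<Sum>d\<in>DI. u d * d j) mod (p ^ r - 1) = 0"
    proof (cases "j \<in> I")
      case True then show ?thesis using u2 by auto
    next
      case False
      then have "(\<Sum>d\<in>DI. u d * d j) = 0" unfolding DI_def restrict_D_def by auto
      then show ?thesis by simp
    qed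
    then show "(\<Sum>d\<in>D. u' d * d j) mod (p ^ r - 1) = 0" unfolding sumj
      by (simp add: mod_add_eq[symmetric])
  qed
  have c3: "\<forall>j\<in>{1..n}. (\<Sum>d\<in>D. u' d * d j) > 0"
  proof
    fix j assume j: "j \<in> {1..n}"
    show "(\<Sum>d\<in>D. u' d * d j) > 0"
    proof (cases "j \<in> I")
      case True then show ?thesis unfolding sumj using u3 by auto
    next
      case False
      then have jj: "j \<in> {1..n} - I" using j by auto
      have "0 < e j j" using e[OF jj] by simp
      also have "\<dots> \<le> (\<Sum>d\<in>E. d j)" by (rule member_le_sum) (use jj fE in \<open>auto simp: E_def\<close>)
      finally have "(p^r - 1) * (\<Sum>d\<in>E. d j) > 0" using pr by simp
      then show ?thesis unfolding sumj by simp
    qed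
  qed
  have val: "(\<Sum>d\<in>D. digit_sum p (u' d)) = card E * (r*(p-1)) + (\<Sum>d\<in>DI. digit_sum p (u d))"
  proof -
    have z: "digit_sum p 0 = 0" by (subst digit_sum.simps) simp
    have "(\<Sum>d\<in>D. digit_sum p (u' d)) = (\<Sum>d\<in>D. (if d \<in> E then r*(p-1) else 0) + (if d \<in> DI then digit_sum p (u d) else 0))"
      by (rule sum.cong) (use disj z ds_pow[OF p2] in \<open>auto simp: u'_def\<close>)
    also have "\<dots> = (\<Sum>d\<in>D \<inter> E. r*(p-1)) + (\<Sum>d\<in>D \<inter> DI. digit_sum p (u d))"
      by (simp only: sum.distrib sum.inter_restrict[OF fD])
    also have "D \<inter> E = E" using ED by auto
    also have "D \<inter> DI = DI" using DID by auto
    finally show ?thesis by simp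
  qed
  have "(\<Sum>d\<in>D. digit_sum p (u' d)) \<in> {(\<Sum>d\<in>D. digit_sum p (u d)) | u.
      (\<forall>d\<in>D. u d < p ^ r) \<and>
      (\<forall>j\<in>{1..n}. (\<Sum>d\<in>D. u d * d j) mod (p ^ r - 1) = 0) \<and>
      (\<forall>j\<in>{1..n}. (\<Sum>d\<in>D. u d * d j) > 0)}" using c1 c2 c3 by blast
  then have "s_Dp p {1..n} D r \<le> (\<Sum>d\<in>D. digit_sum p (u' d))"
    unfolding s_Dp_def by (rule Min_le[OF S_finite[OF fD]])
  also have "\<dots> \<le> (n-k)*(r*(p-1)) + s_Dp p I DI r" unfolding val u4 using cE by simp
  finally show ?thesis unfolding DI_def by simp
qed


theorem lemma2p6:
  fixes n k p :: nat and D :: "(nat \<Rightarrow> nat) set" and I :: "nat set"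
  assumes "finite D"
    and "\<forall>d\<in>D. \<forall>j. j \<notin> {1..n} \<longrightarrow> d j = 0"
    and "\<not> in_coord_hyperplane {1..n} D"
    and "prime p"
    and "I \<subseteq> {1..n}" and "card I = k"
  shows "delta_p p {1..n} D \<le> delta_p p I (restrict_D D I) + ereal (real n - real k)"
proof (cases "in_coord_hyperplane I (restrict_D D I)")
  case True
  then show ?thesis unfolding delta_p_def by simp
next
  case False
  have p2: "p \<ge> 2" using assms(4) prime_ge_2_nat by blast
  have kn: "k \<le> n" using assms(5,6) card_mono[of "{1..n}" I] by simp
  define f where "f = (\<lambda>r::nat. real (s_Dp p {1..n} D r) / real r)"
  define g where "g = (\<lambda>r::nat. real (s_Dp p I (restrict_D D I) r) / real r)"
  define c where "c = (real n - real k) * (real p - 1)"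
  have fg: "f r \<le> g r + c" if r: "r \<in> {1::nat..}" for r
  proof -
    have r1: "r \<ge> 1" using r by simp
    have "real (s_Dp p {1..n} D r) \<le> real (s_Dp p I (restrict_D D I) r) + real ((n-k)*(r*(p-1)))"
      using s_bound[OF assms(1,2,3) p2 assms(5,6) False r1] by linarith
    also have "real ((n-k)*(r*(p-1))) = c * real r" unfolding c_def using kn p2
      by (simp add: of_nat_diff)
    finally have "real (s_Dp p {1..n} D r) \<le> real (s_Dp p I (restrict_D D I) r) + c * real r" .
    then show ?thesis unfolding f_def g_def using r1 by (simp add: divide_simps)
  qed
  have bdd: "bdd_below (f ` {1..})" unfolding f_def by (rule bdd_belowI[of _ 0]) auto
  have "(INF r\<in>{1::nat..}. f r) - c \<le> (INF r\<in>{1::nat..}. g r)"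
  proof (rule cINF_greatest)
    show "{1::nat..} \<noteq> {}" by auto
  next
    fix r :: nat assume r: "r \<in> {1..}"
    have "(INF r\<in>{1::nat..}. f r) \<le> f r" by (rule cINF_lower[OF bdd r])
    then show "(INF r\<in>{1::nat..}. f r) - c \<le> g r" using fg[OF r] by linarith
  qed
  then have le1: "(INF r\<in>{1::nat..}. f r) \<le> (INF r\<in>{1::nat..}. g r) + c" by linarith
  have q: "real p - 1 > 0" using p2 by simp
  have "(1 / (real p - 1)) * (INF r\<in>{1::nat..}. f r) \<le> (1 / (real p - 1)) * ((INF r\<in>{1::nat..}. g r) + c)"
    using le1 q by (intro mult_left_mono) auto
  also have "\<dots> = (1 / (real p - 1)) * (INF r\<in>{1::nat..}. g r) + (real n - real k)"
    using q unfolding c_def by (simp add: field_simps)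
  finally have "(1 / (real p - 1)) * (INF r\<in>{1::nat..}. f r) \<le> (1 / (real p - 1)) * (INF r\<in>{1::nat..}. g r) + (real n - real k)" .
  then show ?thesis unfolding delta_p_def f_def g_def using False assms(3) by simp
qed

end
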